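(* Let $\bar j\in\{1,\dots,\bar d\}$ and $z\in\mathbb R^{\bar d}$ with $\mathrm{supp}(z)\subset\{1,\dots,\bar j-1\}$. Then: (1) if $\bar j=1$, then $\mathrm{supp}(z)=\emptyset$, $z=0$, and $\mathrm{supp}(\nabla f_i(z))\subset\{1\}$ for every $i\in[1,m]$; (2) if $\bar j$ is even, then $\mathrm{supp}(\nabla f_i(z))\subset\{1,\dots,\bar j\}$ for $i\in[1,\frac m3]$ and $\mathrm{supp}(\nabla f_i(z))\subset\{1,\dots,\bar j-1\}$ for $i\in[\frac m3+1,m]$; (3) if $\bar j$ is odd and $\bar j\ne1$, then $\mathrm{supp}(\nabla f_i(z))\subset\{1,\dots,\bar j-1\}$ for $i\in[1,\frac{2m}3]$ and $\mathrm{supp}(\nabla f_i(z))\subset\{1,\dots,\bar j\}$ for $i\in[\frac{2m}3+1,m]$.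
   Context: $\mathrm{supp}(z)=\{j:[z]_j\ne0\}$, $[z]_j$ the $j$-th coordinate. Fix $\epsilon\in(0,1)$, $L_f>0$, integers $m_1\ge2$, $m_2\ge1$ with $m_1m_2$ even, $m=3m_1m_2$, an odd integer $\bar d\ge5$. $\Psi(u)=0$ ($u\le0$), $1-e^{-u^2}$ ($u>0$); $\Phi(v)=4\arctan v+2\pi$. For $z\in\mathbb R^{\bar d}$: $\varphi(z,1)=-\Psi(1)\Phi([z]_1)$, $\varphi(z,j)=\Psi(-[z]_{j-1})\Phi(-[z]_j)-\Psi([z]_{j-1})\Phi([z]_j)$ ($2\le j\le\bar d$); $h_i(z)=\varphi(z,1)+3\sum_{j=1}^{\lfloor\bar d/2\rfloor}\varphi(z,2j)$ for $1\le i\le m/3$, $h_i(z)=\varphi(z,1)$ for $m/3+1\le i\le 2m/3$, $h_i(z)=\varphi(z,1)+3\sum_{j=1}^{\lfloor\bar d/2\rfloor}\varphi(z,2j+1)$ for $2m/3+1\le i\le m$. $f_i(z)=\frac{300\pi\epsilon^2}{mL_f}h_i(\frac{\sqrt mL_fz}{150\pi\epsilon})$. *)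

theory Defs
  imports "HOL-Analysis.Analysis"
begin

text \<open>Vectors in R^dbar are represented as functions nat => real, coordinates 1..dbar.\<close>

definition Psi :: "real \<Rightarrow> real" where
  "Psi u = (if u \<le> 0 then 0 else 1 - exp (- (u\<^sup>2)))"

definition Phi :: "real \<Rightarrow> real" where
  "Phi v = 4 * arctan v + 2 * pi"

definition varphi :: "(nat \<Rightarrow> real) \<Rightarrow> nat \<Rightarrow> real" where
  "varphi z j = (if j = 1 then - Psi 1 * Phi (z 1)
     else Psi (- z (j - 1)) * Phi (- z j) - Psi (z (j - 1)) * Phi (z j))"

definition hfun :: "nat \<Rightarrow> nat \<Rightarrow> nat \<Rightarrow> (nat \<Rightarrow> real) \<Rightarrow> real" where
  "hfun m dbar i z =
    (if i \<le> m div 3 then varphi z 1 + 3 * (\<Sum>j=1..dbar div 2. varphi z (2*j))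
     else if i \<le> 2 * m div 3 then varphi z 1
     else varphi z 1 + 3 * (\<Sum>j=1..dbar div 2. varphi z (2*j+1)))"

definition ffun :: "real \<Rightarrow> real \<Rightarrow> nat \<Rightarrow> nat \<Rightarrow> nat \<Rightarrow> (nat \<Rightarrow> real) \<Rightarrow> real" where
  "ffun eps Lf m dbar i z =
    300 * pi * eps\<^sup>2 / (real m * Lf) *
      hfun m dbar i (\<lambda>j. sqrt (real m) * Lf * z j / (150 * pi * eps))"

definition supp :: "nat \<Rightarrow> (nat \<Rightarrow> real) \<Rightarrow> nat set" where
  "supp d z = {j \<in> {1..d}. z j \<noteq> 0}"

definition grad :: "nat \<Rightarrow> ((nat \<Rightarrow> real) \<Rightarrow> real) \<Rightarrow> (nat \<Rightarrow> real) \<Rightarrow> (nat \<Rightarrow> real)" where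
  "grad d F z = (\<lambda>j. if j \<in> {1..d} then deriv (\<lambda>t. F (z(j := t))) (z j) else 0)"

end

theory Submission
  imports Defs
begin

lemma Psi0: "Psi 0 = 0" by (simp add: Psi_def)

lemma Psi_bound: "\<bar>Psi h\<bar> \<le> h\<^sup>2"
proof (cases "h \<le> 0")
  case False
  have "1 + (- h\<^sup>2) \<le> exp (- h\<^sup>2)" by (rule exp_ge_add_one_self)
  moreover have "exp (- h\<^sup>2) \<le> 1" by simp
  ultimately show ?thesis using False by (simp add: Psi_def)
qed (simp add: Psi_def)

lemma Psi_deriv0: "(Psi has_real_derivative 0) (at 0)"
proof -
  have "((\<lambda>h. Psi h / h) \<longlongrightarrow> 0) (at 0)"
  proof (rule Lim_null_comparison)
    show "\<forall>\<^sub>F h in at 0. norm (Psi h / h) \<le> \<bar>h\<bar>"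
    proof (rule always_eventually, rule allI)
      fix h :: real
      show "norm (Psi h / h) \<le> \<bar>h\<bar>"
      proof (cases "h = 0")
        case False
        have "\<bar>Psi h\<bar> \<le> \<bar>h\<bar> * \<bar>h\<bar>" using Psi_bound[of h] by (simp add: power2_eq_square abs_mult)
        then show ?thesis using False by (simp add: divide_simps abs_divide)
      qed simp
    qed
    show "((\<lambda>h. \<bar>h\<bar>) \<longlongrightarrow> 0) (at (0::real))"
      using tendsto_rabs[OF tendsto_ident_at, of 0 UNIV] by simp
  qed
  then show ?thesis by (simp add: DERIV_def Psi0)
qed

lemma varphi_deriv:
  assumes "k \<ge> 2" "j = k \<longrightarrow> w (k-1) = 0"
  shows "((\<lambda>t. varphi (w(k:=t)) j) has_real_derivative 0) (at 0)"
proof -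
  consider "j = 1" | "j = k" | "j = k + 1" | "j \<noteq> 1" "j \<noteq> k" "j \<noteq> k + 1" by blast
  then show ?thesis
  proof cases
    case 1
    then show ?thesis using assms by (simp add: varphi_def)
  next
    case 2
    moreover have "k - Suc 0 \<noteq> k" using assms by simp
    ultimately have "(\<lambda>t. varphi (w(k:=t)) j) = (\<lambda>t. 0)" using assms by (auto simp: varphi_def Psi0)
    then show ?thesis by simp
  next
    case 3
    then have e: "(\<lambda>t. varphi (w(k:=t)) j) = (\<lambda>t. Psi (- t) * Phi (- w j) - Psi t * Phi (w j))"
      using assms by (auto simp: varphi_def)
    have d1: "((\<lambda>t. Psi (- t)) has_real_derivative 0 * (-1)) (at 0)"
      by (rule DERIV_chain2[where f=Psi]) (auto intro!: derivative_eq_intros simp: Psi_deriv0)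
    have "((\<lambda>t. Psi (- t) * Phi (- w j) - Psi t * Phi (w j)) has_real_derivative 0 * (-1) * Phi (- w j) - 0 * Phi (w j)) (at 0)"
      by (intro DERIV_diff DERIV_cmult_right d1 Psi_deriv0)
    then show ?thesis using e by simp
  next
    case 4
    moreover have "j - Suc 0 \<noteq> k" using 4 by auto
    ultimately have "(\<lambda>t. varphi (w(k:=t)) j) = (\<lambda>t. varphi w j)" using assms by (auto simp: varphi_def)
    then show ?thesis by simp
  qed
qed

lemma hfun_deriv:
  assumes "k \<ge> 2" "(i \<le> m div 3 \<and> even k \<or> \<not> i \<le> 2*m div 3 \<and> odd k) \<longrightarrow> w (k-1) = 0"
  shows "((\<lambda>t. hfun m dbar i (w(k:=t))) has_real_derivative 0) (at 0)"
proof -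
  have v1: "((\<lambda>t. varphi (w(k:=t)) 1) has_real_derivative 0) (at 0)"
    by (rule varphi_deriv) (use assms in auto)
  show ?thesis
  proof (cases "i \<le> m div 3")
    case True
    have s: "((\<lambda>t. \<Sum>j=1..dbar div 2. varphi (w(k:=t)) (2*j)) has_real_derivative (\<Sum>j=1..dbar div 2. 0)) (at 0)"
      by (rule DERIV_sum, rule varphi_deriv) (use assms True in auto)
    have "((\<lambda>t. varphi (w(k:=t)) 1 + 3 * (\<Sum>j=1..dbar div 2. varphi (w(k:=t)) (2*j))) has_real_derivative 0 + 3 * 0) (at 0)"
      by (intro DERIV_add DERIV_cmult v1) (use s in simp)
    then show ?thesis using True by (simp add: hfun_def)
  next
    case F: False
    show ?thesis
    proof (cases "i \<le> 2*m div 3")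
      case True
      then show ?thesis using F v1 by (simp add: hfun_def)
    next
      case False
      have s: "((\<lambda>t. \<Sum>j=1..dbar div 2. varphi (w(k:=t)) (2*j+1)) has_real_derivative (\<Sum>j=1..dbar div 2. 0)) (at 0)"
        by (rule DERIV_sum, rule varphi_deriv) (use assms False in auto)
      have "((\<lambda>t. varphi (w(k:=t)) 1 + 3 * (\<Sum>j=1..dbar div 2. varphi (w(k:=t)) (2*j+1))) has_real_derivative 0 + 3 * 0) (at 0)"
        by (intro DERIV_add DERIV_cmult v1) (use s in simp)
      then show ?thesis using F False by (simp add: hfun_def)
    qed
  qed
qed

lemma grad_zero:
  assumes "k \<in> {1..dbar}" "k \<ge> 2" "z k = 0"
    "(i \<le> m div 3 \<and> even k \<or> \<not> i \<le> 2*m div 3 \<and> odd k) \<longrightarrow> z (k-1) = 0"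
  shows "grad dbar (ffun eps Lf m dbar i) z k = 0"
proof -
  define a where "a = sqrt (real m) * Lf / (150 * pi * eps)"
  define W where "W = (\<lambda>j. sqrt (real m) * Lf * z j / (150 * pi * eps))"
  define C where "C = 300 * pi * eps\<^sup>2 / (real m * Lf)"
  have e: "(\<lambda>t. ffun eps Lf m dbar i (z(k:=t))) = (\<lambda>t. C * hfun m dbar i (W(k := a * t)))"
  proof
    fix t
    have "(\<lambda>j. sqrt (real m) * Lf * (z(k:=t)) j / (150 * pi * eps)) = W(k := a * t)"
      by (auto simp: W_def a_def)
    then show "ffun eps Lf m dbar i (z(k:=t)) = C * hfun m dbar i (W(k := a * t))"
      by (simp add: ffun_def C_def)
  qed
  have h: "((\<lambda>u. hfun m dbar i (W(k:=u))) has_real_derivative 0) (at (a * 0))"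
    using hfun_deriv[of k i m W dbar] assms by (simp add: W_def)
  have "((\<lambda>t. hfun m dbar i (W(k := a * t))) has_real_derivative 0 * a) (at 0)"
    by (rule DERIV_chain2[where g="\<lambda>t. a * t", OF h]) (auto intro!: derivative_eq_intros)
  then have "((\<lambda>t. C * hfun m dbar i (W(k := a * t))) has_real_derivative C * 0) (at 0)"
    by (intro DERIV_cmult) simp
  then have "((\<lambda>t. ffun eps Lf m dbar i (z(k:=t))) has_real_derivative 0) (at (z k))"
    using e assms by simp
  then show ?thesis using assms by (simp add: grad_def DERIV_imp_deriv)
qed

theorem lemma7:
  fixes eps Lf :: real and m1 m2 dbar jbar :: nat and z :: "nat \<Rightarrow> real"
  defines "m \<equiv> 3 * m1 * m2"
  assumes "0 < eps" "eps < 1" "0 < Lf" "2 \<le> m1" "1 \<le> m2" "even (m1 * m2)"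
    and "odd dbar" "5 \<le> dbar"
    and "jbar \<in> {1..dbar}"
    and "\<forall>j. j \<notin> {1..dbar} \<longrightarrow> z j = 0"
    and "supp dbar z \<subseteq> {1..<jbar}"
  shows "(jbar = 1 \<longrightarrow> supp dbar z = {} \<and> z = (\<lambda>_. 0) \<and>
            (\<forall>i\<in>{1..m}. supp dbar (grad dbar (ffun eps Lf m dbar i) z) \<subseteq> {1}))
       \<and> (even jbar \<longrightarrow>
            (\<forall>i\<in>{1..m div 3}. supp dbar (grad dbar (ffun eps Lf m dbar i) z) \<subseteq> {1..jbar}) \<and>
            (\<forall>i\<in>{m div 3 + 1..m}. supp dbar (grad dbar (ffun eps Lf m dbar i) z) \<subseteq> {1..<jbar}))
       \<and> (odd jbar \<and> jbar \<noteq> 1 \<longrightarrow>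
            (\<forall>i\<in>{1..2 * m div 3}. supp dbar (grad dbar (ffun eps Lf m dbar i) z) \<subseteq> {1..<jbar}) \<and>
            (\<forall>i\<in>{2 * m div 3 + 1..m}. supp dbar (grad dbar (ffun eps Lf m dbar i) z) \<subseteq> {1..jbar}))"
proof -
  have zk: "z k = 0" if "k \<ge> jbar" for k
    using assms(11,12) that unfolding supp_def by (cases "k \<in> {1..dbar}") auto
  have g0: "grad dbar (ffun eps Lf m dbar i) z k = 0" if "k \<in> {1..dbar}" "k > jbar" for k i
    by (rule grad_zero) (use that zk assms(10) in auto)
  have g1: "grad dbar (ffun eps Lf m dbar i) z jbar = 0"
    if "jbar \<ge> 2" "\<not> (i \<le> m div 3 \<and> even jbar \<or> \<not> i \<le> 2*m div 3 \<and> odd jbar)" for i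
    by (rule grad_zero) (use that zk assms(10) in auto)
  have P1: "jbar = 1 \<longrightarrow> supp dbar z = {} \<and> z = (\<lambda>_. 0) \<and>
            (\<forall>i\<in>{1..m}. supp dbar (grad dbar (ffun eps Lf m dbar i) z) \<subseteq> {1})"
  proof
    assume j1: "jbar = 1"
    have "z k = 0" for k
      using zk[of k] j1 assms(11) by (cases "k = 0") auto
    then have "z = (\<lambda>_. 0)" by auto
    moreover have "supp dbar (grad dbar (ffun eps Lf m dbar i) z) \<subseteq> {1}" for i
      using g0[of _ i] j1 unfolding supp_def by force
    ultimately show "supp dbar z = {} \<and> z = (\<lambda>_. 0) \<and>
            (\<forall>i\<in>{1..m}. supp dbar (grad dbar (ffun eps Lf m dbar i) z) \<subseteq> {1})"
      by (simp add: supp_def)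
  qed
  have P2: "even jbar \<longrightarrow>
            (\<forall>i\<in>{1..m div 3}. supp dbar (grad dbar (ffun eps Lf m dbar i) z) \<subseteq> {1..jbar}) \<and>
            (\<forall>i\<in>{m div 3 + 1..m}. supp dbar (grad dbar (ffun eps Lf m dbar i) z) \<subseteq> {1..<jbar})"
  proof
    assume ev: "even jbar"
    then have j2: "jbar \<ge> 2" using assms(10) by (cases "jbar = 1") auto
    have A: "supp dbar (grad dbar (ffun eps Lf m dbar i) z) \<subseteq> {1..jbar}" for i
      using g0[of _ i] unfolding supp_def by force
    have B: "supp dbar (grad dbar (ffun eps Lf m dbar i) z) \<subseteq> {1..<jbar}" if "i \<in> {m div 3 + 1..m}" for i
    proof -
      have "grad dbar (ffun eps Lf m dbar i) z jbar = 0" using g1[of i] that ev j2 by auto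
      then show ?thesis using g0[of _ i] unfolding supp_def
        by (smt (verit) atLeastAtMost_iff atLeastLessThan_iff linorder_neqE_nat mem_Collect_eq subsetI)
    qed
    show "(\<forall>i\<in>{1..m div 3}. supp dbar (grad dbar (ffun eps Lf m dbar i) z) \<subseteq> {1..jbar}) \<and>
            (\<forall>i\<in>{m div 3 + 1..m}. supp dbar (grad dbar (ffun eps Lf m dbar i) z) \<subseteq> {1..<jbar})"
      using A B by blast
  qed
  have P3: "odd jbar \<and> jbar \<noteq> 1 \<longrightarrow>
            (\<forall>i\<in>{1..2 * m div 3}. supp dbar (grad dbar (ffun eps Lf m dbar i) z) \<subseteq> {1..<jbar}) \<and>
            (\<forall>i\<in>{2 * m div 3 + 1..m}. supp dbar (grad dbar (ffun eps Lf m dbar i) z) \<subseteq> {1..jbar})"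
  proof
    assume od: "odd jbar \<and> jbar \<noteq> 1"
    then have j2: "jbar \<ge> 2" using assms(10) by auto
    have A: "supp dbar (grad dbar (ffun eps Lf m dbar i) z) \<subseteq> {1..jbar}" for i
      using g0[of _ i] unfolding supp_def by force
    have B: "supp dbar (grad dbar (ffun eps Lf m dbar i) z) \<subseteq> {1..<jbar}" if "i \<in> {1..2 * m div 3}" for i
    proof -
      have "grad dbar (ffun eps Lf m dbar i) z jbar = 0" using g1[of i] that od j2 by auto
      then show ?thesis using g0[of _ i] unfolding supp_def
        by (smt (verit) atLeastAtMost_iff atLeastLessThan_iff linorder_neqE_nat mem_Collect_eq subsetI)
    qed
    show "(\<forall>i\<in>{1..2 * m div 3}. supp dbar (grad dbar (ffun eps Lf m dbar i) z) \<subseteq> {1..<jbar}) \<and>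
            (\<forall>i\<in>{2 * m div 3 + 1..m}. supp dbar (grad dbar (ffun eps Lf m dbar i) z) \<subseteq> {1..jbar})"
      using A B by blast
  qed
  show ?thesis using P1 P2 P3 by blast
qed

end
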